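(* For every $n\ge w\ge 1$ there exists a simple graph on $n$ nodes such that every $w$-cut sparsifier of it has $\Omega(nw)$ edges.
   Context: A sparsifier of $G$ is a graph $H$ obtained by deleting edges and contracting subsets of nodes (self-loops removed, parallel edges kept and counted separately). $H$ is a $w$-cut sparsifier of $G$ if it preserves every cut of $G$ with at most $w$ edges, meaning that none of the cut's edges is deleted and no two nodes from different sides of the cut are contracted together. *)

theory Defs
  imports Complex_Main
begin

definition simple_graph :: "'a set \<Rightarrow> 'a set set \<Rightarrow> bool" where
  "simple_graph V E \<longleftrightarrow> finite V \<and> (\<forall>e\<in>E. e \<subseteq> V \<and> card e = 2)"

definition cut_edges :: "'a set set \<Rightarrow> 'a set \<Rightarrow> 'a set set" where
  "cut_edges E S = {e \<in> E. e \<inter> S \<noteq> {} \<and> e - S \<noteq> {}}"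

text \<open>A sparsifier H of G = (V,E) is given by the set F of non-deleted edges
  (F \<subseteq> E) and a contraction map f (nodes u, v of V are contracted together
  iff f u = f v).  The edges of H are the kept edges whose endpoints are not
  contracted together (self-loops removed); parallel edges of H come from
  distinct edges of G and are thus counted separately.\<close>
definition sparsifier_edges :: "'a set set \<Rightarrow> ('a \<Rightarrow> 'b) \<Rightarrow> 'a set set" where
  "sparsifier_edges F f = {e \<in> F. card (f ` e) = 2}"

definition is_w_cut_sparsifier ::
  "'a set \<Rightarrow> 'a set set \<Rightarrow> nat \<Rightarrow> ('a \<Rightarrow> 'b) \<Rightarrow> 'a set set \<Rightarrow> bool" where
  "is_w_cut_sparsifier V E w f F \<longleftrightarrow>
     F \<subseteq> E \<and>
     (\<forall>S \<subseteq> V. card (cut_edges E S) \<le> w \<longrightarrow>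
        cut_edges E S \<subseteq> F \<and>
        (\<forall>u\<in>V. \<forall>v\<in>V. f u = f v \<longrightarrow> (u \<in> S \<longleftrightarrow> v \<in> S)))"

end

theory Submission
  imports Defs
begin

definition gE :: "nat \<Rightarrow> nat \<Rightarrow> nat set set" where
  "gE p q = (\<lambda>(a,k). {2*a, 2*(a+k)+1}) ` ({..<p} \<times> {..<q})"

definition gg :: "nat \<Rightarrow> nat \<Rightarrow> nat set" where
  "gg u k = (if even u then {u, u+2*k+1} else {u - 2*k - 1, u})"

lemma card2: "card {2*a, 2*(a+k)+(1::nat)} = 2"
proof -
  have "2*a \<noteq> 2*(a+k)+(1::nat)" by presburger
  thus ?thesis by simp
qed

lemma gE_inj: "inj_on (\<lambda>(a,k). {2*a, 2*(a+k)+(1::nat)}) A"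
proof (rule inj_onI, clarify)
  fix a k b l :: nat
  assume h: "{2*a, 2*(a+k)+1} = {2*b, 2*(b+l)+1}"
  have "2*a \<in> {2*b, 2*(b+l)+1}" using h by blast
  hence "2*a = 2*b \<or> 2*a = 2*(b+l)+1" by simp
  hence ab: "a = b" by presburger
  have "2*(a+k)+1 \<in> {2*b, 2*(b+l)+1}" using h by blast
  hence "2*(a+k)+1 = 2*b \<or> 2*(a+k)+1 = 2*(b+l)+1" by simp
  hence "k = l" using ab by presburger
  thus "a = b \<and> k = l" using ab by simp
qed
lemma gE_card: "card (gE p q) = p * q"
  unfolding gE_def by (subst card_image[OF gE_inj]) (simp add: card_cartesian_product)

lemma gE_simple:
  assumes "2*(p+q) \<le> n + 2"
  shows "simple_graph {0..<n} (gE p q)"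
  unfolding simple_graph_def gE_def
proof (intro conjI ballI)
  fix e assume "e \<in> (\<lambda>(a,k). {2*a, 2*(a+k)+1}) ` ({..<p} \<times> {..<q})"
  then obtain a k where e: "e = {2*a, 2*(a+k)+1}" "a < p" "k < q" by auto
  thus "e \<subseteq> {0..<n}" using assms by auto
  show "card e = 2" using e card2 by simp
qed simp

lemma gE_deg:
  "cut_edges (gE p q) {u} \<subseteq> gg u ` {..<q}"
proof
  fix e assume "e \<in> cut_edges (gE p q) {u}"
  then obtain a k where e: "e = {2*a, 2*(a+k)+1}" "a < p" "k < q" and ue: "u \<in> e"
    unfolding cut_edges_def gE_def by auto
  show "e \<in> gg u ` {..<q}"
  proof (cases "u = 2*a")
    case True
    hence "e = gg u k" using e unfolding gg_def by auto
    thus ?thesis using e by auto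
  next
    case False
    hence u: "u = 2*(a+k)+1" using ue e by auto
    hence "e = gg u k" using e unfolding gg_def by auto
    thus ?thesis using e by auto
  qed
qed

lemma gE_degcard: "card (cut_edges (gE p q) {u}) \<le> q"
proof -
  have "card (cut_edges (gE p q) {u}) \<le> card (gg u ` {..<q})"
    by (rule card_mono[OF _ gE_deg]) simp
  also have "\<dots> \<le> q" using card_image_le[of "{..<q}" "gg u"] by simp
  finally show ?thesis .
qed

lemma spars_sub:
  assumes "is_w_cut_sparsifier {0..<n} (gE p q) w f F" "q \<le> w" "2*(p+q) \<le> n + 2"
  shows "gE p q \<subseteq> sparsifier_edges F f"
proof
  fix e assume eE: "e \<in> gE p q"
  then obtain a k where ak: "e = {2*a, 2*(a+k)+1}" "a < p" "k < q"
    unfolding gE_def by auto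
  define x where "x = 2*a"
  define y where "y = 2*(a+k)+1"
  have e1: "x \<noteq> y" unfolding x_def y_def by presburger
  have e2a: "x < n" using ak(2,3) assms(3) unfolding x_def by presburger
  have e2b: "y < n" using ak(2,3) assms(3) unfolding y_def by presburger
  note e2 = e2a e2b
  have e: "e = {x, y}" "x \<noteq> y" "x < n" "y < n"
    using ak(1) e1 e2 unfolding x_def y_def by simp_all
  have c: "card (cut_edges (gE p q) {x}) \<le> w" using gE_degcard[of p q x] assms(2) by linarith
  have S: "{x} \<subseteq> {0..<n}" using e by auto
  from assms(1)[unfolded is_w_cut_sparsifier_def] S c
  have 1: "cut_edges (gE p q) {x} \<subseteq> F" and
       2: "\<forall>u\<in>{0..<n}. \<forall>v\<in>{0..<n}. f u = f v \<longrightarrow> (u \<in> {x} \<longleftrightarrow> v \<in> {x})" by blast+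
  have "e \<in> cut_edges (gE p q) {x}" using eE e unfolding cut_edges_def by auto
  hence "e \<in> F" using 1 by blast
  moreover have "f x \<noteq> f y" using 2[rule_format, of x y] e by auto
  ultimately show "e \<in> sparsifier_edges F f" unfolding sparsifier_edges_def using e by auto
qed

theorem mainTheorem6:
  shows "\<exists>c::real. c > 0 \<and> (\<exists>N::nat. \<forall>n w::nat. N \<le> n \<and> 1 \<le> w \<and> w \<le> n \<longrightarrow>
     (\<exists>E :: nat set set. simple_graph {0..<n} E \<and>
        (\<forall>(f :: nat \<Rightarrow> nat) F. is_w_cut_sparsifier {0..<n} E w f F \<longrightarrow>
            real (card (sparsifier_edges F f)) \<ge> c * real n * real w)))"
proof (rule exI[of _ "1/32"], rule conjI, simp, rule exI[of _ 8], intro allI impI)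
  fix n w :: nat assume h: "8 \<le> n \<and> 1 \<le> w \<and> w \<le> n"
  define p where "p = n div 4"
  define q where "q = (w+3) div 4"
  have pq1: "2*(p+q) \<le> n + 2" using h unfolding p_def q_def by presburger
  have pq2: "q \<le> w" using h unfolding p_def q_def by presburger
  note pq = pq1 pq2
  have p8: "8 * p \<ge> n" using h unfolding p_def by presburger
  have q4: "4 * q \<ge> w" unfolding q_def by presburger
  show "\<exists>E. simple_graph {0..<n} E \<and> (\<forall>(f :: nat \<Rightarrow> nat) F. is_w_cut_sparsifier {0..<n} E w f F \<longrightarrow>
            real (card (sparsifier_edges F f)) \<ge> 1/32 * real n * real w)"
  proof (intro exI[of _ "gE p q"] conjI allI impI)
    show "simple_graph {0..<n} (gE p q)" using gE_simple[OF pq(1)] .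
    fix f :: "nat \<Rightarrow> nat" and F assume sp: "is_w_cut_sparsifier {0..<n} (gE p q) w f F"
    have sub: "gE p q \<subseteq> sparsifier_edges F f" using spars_sub[OF sp pq(2) pq(1)] .
    have fg: "finite (gE p q)" unfolding gE_def by simp
    have Fsub: "F \<subseteq> gE p q" using sp unfolding is_w_cut_sparsifier_def by simp
    have fin: "finite F" by (rule finite_subset[OF Fsub fg])
    have "finite (sparsifier_edges F f)" using fin unfolding sparsifier_edges_def by simp
    hence "card (gE p q) \<le> card (sparsifier_edges F f)" by (rule card_mono[OF _ sub])
    hence "p * q \<le> card (sparsifier_edges F f)" by (simp add: gE_card)
    hence "real p * real q \<le> real (card (sparsifier_edges F f))"
      by (simp only: of_nat_mult[symmetric] of_nat_le_iff)
    moreover have "real n * real w \<le> 32 * (real p * real q)"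
    proof -
      have "real n * real w \<le> (8 * real p) * (4 * real q)"
        using p8 q4 by (intro mult_mono) (simp_all add: of_nat_mono flip: of_nat_mult)
      thus ?thesis by simp
    qed
    ultimately show "real (card (sparsifier_edges F f)) \<ge> 1/32 * real n * real w"
      by linarith
  qed
qed

end
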